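(* Let $\mathcal H$ be a connected $As^c$-$Mag$-bialgebra and $e=\mathrm{id}+\sum_{n\ge1}(-1)^n\omega^{n+1}\circ\delta^n:\bar{\mathcal H}\to\bar{\mathcal H}$. Then for every $x\in\bar{\mathcal H}$, $$x=e(x)+\omega_r^2\big((e\otimes e)(\delta^1(x))\big)+\dots+\omega_r^{n+1}\big(e^{\otimes(n+1)}(\delta^n(x))\big)+\cdots,$$ the sum being finite.
   Context: An $As^c$-$Mag$-bialgebra is a vector space $\mathcal H$ over a field with a bilinear product $\cdot$ (not assumed associative) with two-sided unit $1$ and a coassociative counital coproduct $\Delta$ with $\Delta(1)=1\otimes1$ and $\Delta(x\cdot y)=\Delta(x)\cdot(1\otimes y)+(x\otimes1)\cdot\Delta(y)-x\otimes y$, the product on $\mathcal H\otimes\mathcal H$ being componentwise. $\bar{\mathcal H}$ = kernel of the counit; $\delta(x)=\Delta(x)-x\otimes1-1\otimes x$ on $\bar{\mathcal H}$; $\delta^1=\delta$, $\delta^n=(\delta\otimes\mathrm{id}^{\otimes(n-1)})\circ\delta^{n-1}$. Connected means: for each $x\in\bar{\mathcal H}$, $\delta^n(x)=0$ for $n$ large. $\omega^m$ is the left comb ($\omega^1(x)=x$, $\omega^m(x_1,\dots,x_m)=\omega^{m-1}(x_1,\dots,x_{m-1})\cdot x_m$) and $\omega_r^m$ the right comb ($\omega_r^1(x)=x$, $\omega_r^m(x_1,\dots,x_m)=x_1\cdot\omega_r^{m-1}(x_2,\dots,x_m)$), applied to the tensor factors of an element of $\bar{\mathcal H}^{\otimes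 m}$. *)

theory Defs
  imports Complex_Main
begin

text \<open>
  An element of the tensor power H^(tensor n) (n \<ge> 1) is represented by a
  finite list of pure tensors, each pure tensor x1 \<otimes> ... \<otimes> xn being a list [x1,...,xn]
  of length n; the list denotes the sum of its pure tensors (scalars are absorbed in
  the first factor, the empty list is the zero tensor). Two representatives denote
  the same tensor iff their formal difference lies in the subspace spanned by the
  multilinearity relations, i.e. H^(tensor n) is literally the free vector space on
  n-tuples modulo multilinearity.
\<close>

definition delta_at :: "'a list \<Rightarrow> 'a list \<Rightarrow> 'k::field" where
  "delta_at l = (\<lambda>m. if m = l then 1 else 0)"

inductive_set tens_rel :: "('k::field \<Rightarrow> 'a::ab_group_add \<Rightarrow> 'a) \<Rightarrow> ('a list \<Rightarrow> 'k) set"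
  for scale :: "'k::field \<Rightarrow> 'a::ab_group_add \<Rightarrow> 'a" where
  zero: "(\<lambda>_. 0) \<in> tens_rel scale"
| gen_add: "(\<lambda>m. delta_at (xs @ [a + b] @ ys) m - delta_at (xs @ [a] @ ys) m
               - delta_at (xs @ [b] @ ys) m) \<in> tens_rel scale"
| gen_scale: "(\<lambda>m. delta_at (xs @ [scale c a] @ ys) m - c * delta_at (xs @ [a] @ ys) m)
               \<in> tens_rel scale"
| add: "f \<in> tens_rel scale \<Longrightarrow> g \<in> tens_rel scale \<Longrightarrow> (\<lambda>m. f m + g m) \<in> tens_rel scale"
| smult: "f \<in> tens_rel scale \<Longrightarrow> (\<lambda>m. c * f m) \<in> tens_rel scale"

definition fsum :: "'a list list \<Rightarrow> 'a list \<Rightarrow> 'k::field" where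
  "fsum ts = (\<lambda>l. of_nat (count_list ts l))"

definition teq :: "('k::field \<Rightarrow> 'a::ab_group_add \<Rightarrow> 'a) \<Rightarrow> 'a list list \<Rightarrow> 'a list list \<Rightarrow> bool" where
  "teq scale ts us \<longleftrightarrow> (\<lambda>l. fsum ts l - fsum us l) \<in> tens_rel scale"

text \<open>Apply a map f : H \<rightarrow> H^(tensor k) (given by representatives) in slot i of every
  pure tensor, i.e. id^(tensor i) \<otimes> f \<otimes> id^(tensor ...).\<close>
definition tmap_slot :: "nat \<Rightarrow> ('a \<Rightarrow> 'a list list) \<Rightarrow> 'a list list \<Rightarrow> 'a list list" where
  "tmap_slot i f ts = concat (map (\<lambda>l. map (\<lambda>p. take i l @ p @ drop (Suc i) l) (f (l ! i))) ts)"

text \<open>Left comb omega^m and right comb omega_r^m on an m-tuple (m \<ge> 1).\<close>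
fun lcomb :: "('a \<Rightarrow> 'a \<Rightarrow> 'a) \<Rightarrow> 'a list \<Rightarrow> 'a" where
  "lcomb mult [] = undefined"
| "lcomb mult (x # xs) = foldl mult x xs"

fun rcomb :: "('a \<Rightarrow> 'a \<Rightarrow> 'a) \<Rightarrow> 'a list \<Rightarrow> 'a" where
  "rcomb mult [] = undefined"
| "rcomb mult [x] = x"
| "rcomb mult (x # y # ys) = mult x (rcomb mult (y # ys))"

definition proj :: "('k::field \<Rightarrow> 'a::ab_group_add \<Rightarrow> 'a) \<Rightarrow> ('a \<Rightarrow> 'k) \<Rightarrow> 'a \<Rightarrow> 'a \<Rightarrow> 'a" where
  "proj scale eps u x = x - scale (eps x) u"

text \<open>Reduced coproduct delta(x) = Delta(x) - x\<otimes>1 - 1\<otimes>x, represented with factors in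
  H-bar (we apply proj\<otimes>proj, which is the identity on H-bar\<otimes>H-bar, where delta takes
  its values for x in H-bar).\<close>
definition rcoprod :: "('k::field \<Rightarrow> 'a::ab_group_add \<Rightarrow> 'a) \<Rightarrow> ('a \<Rightarrow> 'k) \<Rightarrow> 'a
     \<Rightarrow> ('a \<Rightarrow> 'a list list) \<Rightarrow> 'a \<Rightarrow> 'a list list" where
  "rcoprod scale eps u Delta x =
     map (map (proj scale eps u)) (Delta x @ [[scale (-1) x, u], [u, scale (-1) x]])"

text \<open>Iterated reduced coproduct: dpow 0 x = x, dpow n = (delta \<otimes> id^(n-1)) o dpow (n-1);
  dpow n x represents delta^n(x) in H-bar^(tensor (n+1)).\<close>
fun dpow :: "('k::field \<Rightarrow> 'a::ab_group_add \<Rightarrow> 'a) \<Rightarrow> ('a \<Rightarrow> 'k) \<Rightarrow> 'a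
     \<Rightarrow> ('a \<Rightarrow> 'a list list) \<Rightarrow> nat \<Rightarrow> 'a \<Rightarrow> 'a list list" where
  "dpow scale eps u Delta 0 x = [[x]]"
| "dpow scale eps u Delta (Suc n) x = tmap_slot 0 (rcoprod scale eps u Delta) (dpow scale eps u Delta n x)"

definition tapply :: "('a list \<Rightarrow> 'a::ab_group_add) \<Rightarrow> 'a list list \<Rightarrow> 'a" where
  "tapply g ts = sum_list (map g ts)"

definition cdeg :: "('k::field \<Rightarrow> 'a::ab_group_add \<Rightarrow> 'a) \<Rightarrow> ('a \<Rightarrow> 'k) \<Rightarrow> 'a
     \<Rightarrow> ('a \<Rightarrow> 'a list list) \<Rightarrow> 'a \<Rightarrow> nat" where
  "cdeg scale eps u Delta x = (LEAST n. teq scale (dpow scale eps u Delta n x) [])"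

text \<open>e = id + sum_{n\<ge>1} (-1)^n omega^(n+1) o delta^n (a finite sum on a connected bialgebra:
  terms with n \<ge> cdeg x vanish).\<close>
definition eproj :: "('k::field \<Rightarrow> 'a::ab_group_add \<Rightarrow> 'a) \<Rightarrow> ('a \<Rightarrow> 'a \<Rightarrow> 'a) \<Rightarrow> ('a \<Rightarrow> 'k) \<Rightarrow> 'a
     \<Rightarrow> ('a \<Rightarrow> 'a list list) \<Rightarrow> 'a \<Rightarrow> 'a" where
  "eproj scale mult eps u Delta x =
     x + (\<Sum>n\<in>{1..<cdeg scale eps u Delta x}.
            scale ((-1) ^ n) (tapply (lcomb mult) (dpow scale eps u Delta n x)))"

definition AsMag_bialgebra ::
  "('k::field \<Rightarrow> 'a::ab_group_add \<Rightarrow> 'a) \<Rightarrow> ('a \<Rightarrow> 'a \<Rightarrow> 'a) \<Rightarrow> 'a \<Rightarrow> ('a \<Rightarrow> 'a list list) \<Rightarrow> ('a \<Rightarrow> 'k) \<Rightarrow> bool"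
where
  "AsMag_bialgebra scale mult u Delta eps \<longleftrightarrow>
     vector_space scale
   \<and> (\<forall>x. Vector_Spaces.linear scale scale (mult x))
   \<and> (\<forall>y. Vector_Spaces.linear scale scale (\<lambda>x. mult x y))
   \<and> (\<forall>x. mult u x = x \<and> mult x u = x)
   \<and> (\<forall>x. \<forall>l\<in>set (Delta x). length l = 2)
   \<and> (\<forall>x y. teq scale (Delta (x + y)) (Delta x @ Delta y))
   \<and> (\<forall>c x. teq scale (Delta (scale c x)) (map (\<lambda>l. scale c (l ! 0) # tl l) (Delta x)))
   \<and> (\<forall>x. teq scale (tmap_slot 0 Delta (Delta x)) (tmap_slot 1 Delta (Delta x)))
   \<and> (\<forall>x y. eps (x + y) = eps x + eps y) \<and> (\<forall>c x. eps (scale c x) = c * eps x)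
   \<and> (\<forall>x. sum_list (map (\<lambda>l. scale (eps (l ! 0)) (l ! 1)) (Delta x)) = x)
   \<and> (\<forall>x. sum_list (map (\<lambda>l. scale (eps (l ! 1)) (l ! 0)) (Delta x)) = x)
   \<and> teq scale (Delta u) [[u, u]]
   \<and> (\<forall>x y. teq scale (Delta (mult x y))
              (map (\<lambda>l. [mult (l ! 0) u, mult (l ! 1) y]) (Delta x)
               @ map (\<lambda>l. [mult x (l ! 0), mult u (l ! 1)]) (Delta y)
               @ [[scale (-1) x, y]]))"

definition connected_bialg ::
  "('k::field \<Rightarrow> 'a::ab_group_add \<Rightarrow> 'a) \<Rightarrow> 'a \<Rightarrow> ('a \<Rightarrow> 'a list list) \<Rightarrow> ('a \<Rightarrow> 'k) \<Rightarrow> bool"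
where
  "connected_bialg scale u Delta eps \<longleftrightarrow>
     (\<forall>x. eps x = 0 \<longrightarrow> (\<exists>N. \<forall>n\<ge>N. teq scale (dpow scale eps u Delta n x) []))"

end

theory Submission
  imports Defs
begin


definition mlin :: "('k::field \<Rightarrow> 'a::ab_group_add \<Rightarrow> 'a) \<Rightarrow> nat \<Rightarrow> ('a list \<Rightarrow> 'a) \<Rightarrow> bool" where
  "mlin scale k g \<longleftrightarrow>
    (\<forall>xs ys a b. length xs + length ys + 1 = k \<longrightarrow> g (xs @ [a + b] @ ys) = g (xs @ [a] @ ys) + g (xs @ [b] @ ys)) \<and>
    (\<forall>xs ys c a. length xs + length ys + 1 = k \<longrightarrow> g (xs @ [scale c a] @ ys) = scale c (g (xs @ [a] @ ys)))"

lemma tens_rel_fin: "f \<in> tens_rel scale \<Longrightarrow> finite {l. f l \<noteq> 0}"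
proof (induction rule: tens_rel.induct)
  case zero then show ?case by simp
next
  case (gen_add xs a b ys)
  show ?case by (rule finite_subset[of _ "{xs @ [a + b] @ ys, xs @ [a] @ ys, xs @ [b] @ ys}"]) (auto simp: delta_at_def)
next
  case (gen_scale xs c a ys)
  show ?case by (rule finite_subset[of _ "{xs @ [scale c a] @ ys, xs @ [a] @ ys}"]) (auto simp: delta_at_def)
next
  case (add f g)
  show ?case by (rule finite_subset[of _ "{l. f l \<noteq> 0} \<union> {l. g l \<noteq> 0}"]) (use add in auto)
next
  case (smult f c)
  show ?case by (rule finite_subset[of _ "{l. f l \<noteq> 0}"]) (use smult in auto)
qed

definition PhiT :: "('k::field \<Rightarrow> 'a::ab_group_add \<Rightarrow> 'a) \<Rightarrow> nat \<Rightarrow> ('a list \<Rightarrow> 'a) \<Rightarrow> ('a list \<Rightarrow> 'k) \<Rightarrow> 'a" where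
  "PhiT scale k g f = (\<Sum>l\<in>{l. f l \<noteq> 0 \<and> length l = k}. scale (f l) (g l))"

context vector_space begin


lemma Phi_S: fixes f :: "'b list \<Rightarrow> 'a" assumes "finite S" "{l. f l \<noteq> 0} \<subseteq> S"
  shows "PhiT scale k g f = (\<Sum>l\<in>{l\<in>S. length l = k}. scale (f l) (g l))"
  unfolding PhiT_def
  by (rule sum.mono_neutral_left) (use assms in \<open>auto intro: finite_subset\<close>)

lemma sum_delta_scale: fixes g :: "'b list \<Rightarrow> 'b" assumes "finite S" "A \<in> S"
  shows "(\<Sum>l\<in>{l\<in>S. length l = k}. scale (delta_at A l) (g l)) = (if length A = k then g A else 0)"
proof -
  have "(\<Sum>l\<in>{l\<in>S. length l = k}. scale (delta_at A l) (g l)) = (\<Sum>l\<in>{l\<in>S. length l = k}. if l = A then g A else 0)"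
    by (rule sum.cong) (auto simp: delta_at_def)
  also have "\<dots> = (if A \<in> {l\<in>S. length l = k} then g A else 0)"
    using assms by (simp add: sum.delta)
  finally show ?thesis using assms by simp
qed

lemma Phi_rel: fixes f :: "'b list \<Rightarrow> 'a" assumes "mlin scale k g" "f \<in> tens_rel scale" shows "PhiT scale k g f = 0"
  using assms(2)
proof (induction rule: tens_rel.induct)
  case zero then show ?case by (simp add: PhiT_def)
next
  case (gen_add xs a b ys)
  let ?S = "{xs @ [a + b] @ ys, xs @ [a] @ ys, xs @ [b] @ ys}"
  have "PhiT scale k g (\<lambda>m. delta_at (xs @ [a + b] @ ys) m - delta_at (xs @ [a] @ ys) m - delta_at (xs @ [b] @ ys) m)
     = (\<Sum>l\<in>{l\<in>?S. length l = k}. scale (delta_at (xs @ [a + b] @ ys) l) (g l)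
           - scale (delta_at (xs @ [a] @ ys) l) (g l) - scale (delta_at (xs @ [b] @ ys) l) (g l))"
    by (subst Phi_S[of ?S]) (auto simp: delta_at_def scale_left_diff_distrib)
  also have "\<dots> = 0"
    unfolding sum_subtractf by (subst sum_delta_scale, simp, simp)+ (use assms(1) in \<open>auto simp: mlin_def\<close>)
  finally show ?case .
next
  case (gen_scale xs c a ys)
  let ?S = "{xs @ [scale c a] @ ys, xs @ [a] @ ys}"
  have "PhiT scale k g (\<lambda>m. delta_at (xs @ [scale c a] @ ys) m - c * delta_at (xs @ [a] @ ys) m)
     = (\<Sum>l\<in>{l\<in>?S. length l = k}. scale (delta_at (xs @ [scale c a] @ ys) l) (g l)
           - scale c (scale (delta_at (xs @ [a] @ ys) l) (g l)))"
    by (subst Phi_S[of ?S]) (auto simp: delta_at_def scale_left_diff_distrib)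
  also have "\<dots> = 0"
    unfolding sum_subtractf scale_sum_right[symmetric] by (subst sum_delta_scale, simp, simp)+ (use assms(1) in \<open>auto simp: mlin_def\<close>)
  finally show ?case .
next
  case (add f h)
  let ?S = "{l. f l \<noteq> 0} \<union> {l. h l \<noteq> 0}"
  have fin: "finite ?S" using add tens_rel_fin by blast
  have "PhiT scale k g (\<lambda>m. f m + h m) = (\<Sum>l\<in>{l\<in>?S. length l = k}. scale (f l) (g l) + scale (h l) (g l))"
    by (subst Phi_S[OF fin]) (auto simp: scale_left_distrib)
  also have "\<dots> = PhiT scale k g f + PhiT scale k g h"
    by (simp add: sum.distrib Phi_S[OF fin])
  finally show ?case using add by simp
next
  case (smult f c)
  let ?S = "{l. f l \<noteq> 0}"
  have fin: "finite ?S" using smult tens_rel_fin by blast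
  have "PhiT scale k g (\<lambda>m. c * f m) = (\<Sum>l\<in>{l\<in>?S. length l = k}. scale c (scale (f l) (g l)))"
    by (subst Phi_S[OF fin]) auto
  also have "\<dots> = scale c (PhiT scale k g f)"
    by (simp add: scale_sum_right Phi_S[OF fin])
  finally show ?case using smult by simp
qed

lemma fsum_notin: "l \<notin> set ts \<Longrightarrow> fsum ts l = 0"
  by (simp add: fsum_def count_list_0_iff)

lemma fsum_nz: "fsum ts l \<noteq> 0 \<Longrightarrow> l \<in> set ts"
  using fsum_notin by blast

lemma tapply_Phi0: "tapply g ts = (\<Sum>l\<in>set ts. scale (fsum ts l) (g l))"
proof (induction ts)
  case Nil then show ?case by (simp add: tapply_def)
next
  case (Cons t ts)
  have e: "scale (fsum (t # ts) l) (g l) = scale (fsum ts l) (g l) + (if l = t then g t else 0)" for l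
    by (auto simp: fsum_def scale_left_distrib)
  have "(\<Sum>l\<in>set (t # ts). scale (fsum (t # ts) l) (g l))
     = (\<Sum>l\<in>set (t # ts). scale (fsum ts l) (g l)) + (\<Sum>l\<in>set (t # ts). if l = t then g t else 0)"
    unfolding e by (rule sum.distrib)
  also have "(\<Sum>l\<in>set (t # ts). scale (fsum ts l) (g l)) = (\<Sum>l\<in>set ts. scale (fsum ts l) (g l))"
    by (rule sum.mono_neutral_right) (auto dest: fsum_nz)
  also have "(\<Sum>l\<in>set (t # ts). if l = t then g t else 0) = g t"
    by (simp add: sum.delta)
  finally show ?case using Cons by (simp add: tapply_def)
qed

lemma tapply_Phi: assumes "\<forall>l\<in>set ts. length l = k"
  shows "tapply g ts = (\<Sum>l\<in>{l\<in>set ts. length l = k}. scale (fsum ts l) (g l))"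
proof -
  have "{l\<in>set ts. length l = k} = set ts" using assms by auto
  then show ?thesis by (simp add: tapply_Phi0)
qed

lemma mlin_teq: assumes "mlin scale k g" "teq scale ts us"
  "\<forall>l\<in>set ts. length l = k" "\<forall>l\<in>set us. length l = k"
  shows "tapply g ts = tapply g us"
proof -
  let ?S = "set ts \<union> set us"
  let ?f = "\<lambda>l. (fsum ts l - fsum us l :: 'a)"
  have rel: "?f \<in> tens_rel scale" using assms(2) by (simp add: teq_def)
  have sub: "{l. ?f l \<noteq> 0} \<subseteq> ?S" proof
    fix l assume "l \<in> {l. ?f l \<noteq> 0}"
    then have "?f l \<noteq> 0" by simp
    then show "l \<in> ?S" using fsum_notin[of l ts] fsum_notin[of l us] by (metis UnCI diff_self)
  qed
  have "0 = PhiT scale k g ?f" using Phi_rel[OF assms(1) rel] by simp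
  also have "\<dots> = (\<Sum>l\<in>{l\<in>?S. length l = k}. scale (fsum ts l) (g l)) - (\<Sum>l\<in>{l\<in>?S. length l = k}. scale (fsum us l) (g l))"
    by (subst Phi_S[OF _ sub]) (auto simp: scale_left_diff_distrib sum_subtractf)
  also have "(\<Sum>l\<in>{l\<in>?S. length l = k}. scale (fsum ts l) (g l)) = tapply g ts"
    by (subst tapply_Phi[OF assms(3)], rule sum.mono_neutral_right) (auto dest: fsum_nz)
  also have "(\<Sum>l\<in>{l\<in>?S. length l = k}. scale (fsum us l) (g l)) = tapply g us"
    by (subst tapply_Phi[OF assms(4)], rule sum.mono_neutral_right) (auto dest: fsum_nz)
  finally show ?thesis by simp
qed

end



lemma tapply_nil[simp]: "tapply g [] = 0" by (simp add: tapply_def)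
lemma tapply_cons[simp]: "tapply g (l # ts) = g l + tapply g ts" by (simp add: tapply_def)
lemma tapply_append[simp]: "tapply g (ts @ us) = tapply g ts + tapply g us" by (simp add: tapply_def)
lemma tapply_map: "tapply g (map f ts) = tapply (\<lambda>l. g (f l)) ts" by (induction ts) auto
lemma tapply_cong: "(\<And>l. l \<in> set ts \<Longrightarrow> g l = h l) \<Longrightarrow> tapply g ts = tapply h ts"
  by (induction ts) auto
lemma tapply_add: "tapply (\<lambda>l. g l + h l) ts = tapply g ts + tapply h ts"
  by (induction ts) (simp_all add: add_ac)
lemma tapply_diff: "tapply (\<lambda>l. g l - h l) ts = tapply g ts - tapply h ts"
  by (induction ts) (simp_all add: diff_add_eq add_diff_eq diff_diff_eq2)
lemma tapply_zero[simp]: "tapply (\<lambda>l. 0) ts = 0"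
  by (induction ts) auto
lemma additive0: fixes \<phi> :: "'a::ab_group_add \<Rightarrow> 'b::ab_group_add" assumes "\<And>a b. \<phi> (a + b) = \<phi> a + \<phi> b" shows "\<phi> 0 = 0"
proof -
  have "\<phi> 0 = \<phi> (0 + 0)" by simp
  also have "\<dots> = \<phi> 0 + \<phi> 0" by (rule assms)
  finally show ?thesis by simp
qed
lemma tapply_additive: fixes \<phi> :: "'a::ab_group_add \<Rightarrow> 'a"
  assumes "\<And>a b. \<phi> (a + b) = \<phi> a + \<phi> b"
  shows "\<phi> (tapply g ts) = tapply (\<lambda>l. \<phi> (g l)) ts"
  by (induction ts) (auto simp: assms additive0[of \<phi>, OF assms])
lemma additive_sum: fixes \<phi> :: "'a::ab_group_add \<Rightarrow> 'b::ab_group_add"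
  assumes "\<And>a b. \<phi> (a + b) = \<phi> a + \<phi> b"
  shows "\<phi> (\<Sum>k\<in>K. f k) = (\<Sum>k\<in>K. \<phi> (f k))"
proof -
  interpret additive \<phi> by standard (rule assms)
  show ?thesis by (rule sum)
qed
lemma tapply_sum: "tapply (\<lambda>l. \<Sum>k\<in>K. f k l) ts = (\<Sum>k\<in>K. tapply (f k) ts)"
  by (induction ts) (auto simp: sum.distrib)
lemma tapply_swap: "tapply (\<lambda>p. tapply (\<lambda>q. f p q) Q) P = tapply (\<lambda>q. tapply (\<lambda>p. f p q) P) Q"
  by (induction P) (auto simp: tapply_add)

lemma tapply_tmap: "tapply g (tmap_slot i f ts) = tapply (\<lambda>l. tapply (\<lambda>p. g (take i l @ p @ drop (Suc i) l)) (f (l ! i))) ts"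
  by (induction ts) (auto simp: tmap_slot_def tapply_def comp_def)

lemma tmap_slot_set: "l \<in> set (tmap_slot i f ts) \<Longrightarrow> \<exists>l0\<in>set ts. \<exists>p\<in>set (f (l0 ! i)). l = take i l0 @ p @ drop (Suc i) l0"
  by (auto simp: tmap_slot_def)

lemma (in vector_space) tapply_scale: "tapply (\<lambda>l. scale c (g l)) ts = scale c (tapply g ts)"
  by (induction ts) (auto simp: scale_right_distrib)

lemma mlinD: "mlin scale k g \<Longrightarrow> length xs + length ys + 1 = k \<Longrightarrow> g (xs @ [a + b] @ ys) = g (xs @ [a] @ ys) + g (xs @ [b] @ ys)"
  "mlin scale k g \<Longrightarrow> length xs + length ys + 1 = k \<Longrightarrow> g (xs @ [scale c a] @ ys) = scale c (g (xs @ [a] @ ys))"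
  by (auto simp: mlin_def)

lemma mlinI: "(\<And>xs ys a b. length xs + length ys + 1 = k \<Longrightarrow> g (xs @ [a + b] @ ys) = g (xs @ [a] @ ys) + g (xs @ [b] @ ys))
  \<Longrightarrow> (\<And>xs ys c a. length xs + length ys + 1 = k \<Longrightarrow> g (xs @ [scale c a] @ ys) = scale c (g (xs @ [a] @ ys)))
  \<Longrightarrow> mlin scale k g"
  by (auto simp: mlin_def)

lemma (in vector_space) mlin_zero: "mlin scale k g \<Longrightarrow> length xs + length ys + 1 = k \<Longrightarrow> g (xs @ [0] @ ys) = 0"
  using mlinD(2)[of scale k g xs ys 0 0] by simp

locale asmag0 =
  fixes scale :: "'k::field \<Rightarrow> 'a::ab_group_add \<Rightarrow> 'a" and mult :: "'a \<Rightarrow> 'a \<Rightarrow> 'a"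
    and u :: 'a and Delta :: "'a \<Rightarrow> 'a list list" and eps :: "'a \<Rightarrow> 'k"
  assumes ax: "AsMag_bialgebra scale mult u Delta eps"
begin

sublocale vector_space scale using ax by (simp add: AsMag_bialgebra_def)

lemma mult_r: "mult x (a + b) = mult x a + mult x b" "mult x (scale c a) = scale c (mult x a)"
proof -
  have "Vector_Spaces.linear scale scale (mult x)" using ax by (simp add: AsMag_bialgebra_def)
  then have "module_hom scale scale (mult x)" by (simp add: module_hom_iff_linear)
  then show "mult x (a + b) = mult x a + mult x b" "mult x (scale c a) = scale c (mult x a)"
    by (simp_all add: module_hom_iff)
qed

lemma mult_l: "mult (a + b) y = mult a y + mult b y" "mult (scale c a) y = scale c (mult a y)"
proof -
  have "Vector_Spaces.linear scale scale (\<lambda>x. mult x y)" using ax by (simp add: AsMag_bialgebra_def)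
  then have "module_hom scale scale (\<lambda>x. mult x y)" by (simp add: module_hom_iff_linear)
  then show "mult (a + b) y = mult a y + mult b y" "mult (scale c a) y = scale c (mult a y)"
    by (simp_all add: module_hom_iff)
qed

lemma unit_l: "mult u x = x" and unit_r: "mult x u = x"
  using ax by (simp_all add: AsMag_bialgebra_def)

lemma Dlen: "l \<in> set (Delta x) \<Longrightarrow> length l = 2"
  using ax by (simp add: AsMag_bialgebra_def)

lemma Dadd: "teq scale (Delta (x + y)) (Delta x @ Delta y)"
  and Dscale: "teq scale (Delta (scale c x)) (map (\<lambda>l. scale c (l ! 0) # tl l) (Delta x))"
  and coass: "teq scale (tmap_slot 0 Delta (Delta x)) (tmap_slot 1 Delta (Delta x))"
  and eps_add: "eps (x + y) = eps x + eps y" and eps_scale: "eps (scale c x) = c * eps x"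
  and counit: "sum_list (map (\<lambda>l. scale (eps (l ! 0)) (l ! 1)) (Delta x)) = x"
  and Du: "teq scale (Delta u) [[u, u]]"
  using ax by (simp_all add: AsMag_bialgebra_def)

lemma eps_zero[simp]: "eps 0 = 0"
  using eps_scale[of 0 0] by simp

lemma len2_cases: assumes "length xs + length ys + 1 = (2::nat)"
  obtains y where "xs = []" "ys = [y]" | x where "xs = [x]" "ys = []"
proof (cases xs)
  case Nil then show ?thesis using assms that by (cases ys) auto
next
  case (Cons x xs') then show ?thesis using assms that by (cases ys) auto
qed

lemma mlin_counit: "mlin scale 2 (\<lambda>l. scale (eps (l ! 0)) (l ! 1))"
proof (rule mlinI)
  fix xs ys :: "'a list" and a b assume "length xs + length ys + 1 = 2"
  then show "scale (eps ((xs @ [a + b] @ ys) ! 0)) ((xs @ [a + b] @ ys) ! 1) =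
         scale (eps ((xs @ [a] @ ys) ! 0)) ((xs @ [a] @ ys) ! 1) + scale (eps ((xs @ [b] @ ys) ! 0)) ((xs @ [b] @ ys) ! 1)"
    by (rule len2_cases) (simp_all add: eps_add scale_left_distrib scale_right_distrib)
next
  fix xs ys :: "'a list" and c a assume "length xs + length ys + 1 = 2"
  then show "scale (eps ((xs @ [scale c a] @ ys) ! 0)) ((xs @ [scale c a] @ ys) ! 1) =
         scale c (scale (eps ((xs @ [a] @ ys) ! 0)) ((xs @ [a] @ ys) ! 1))"
  proof (rule len2_cases)
    fix y assume "xs = []" "ys = [y]" then show ?thesis by (simp add: eps_scale)
  next
    fix x assume "xs = [x]" "ys = []" then show ?thesis by (simp add: mult.commute[of c])
  qed
qed

lemma eps_u: "u = 0 \<or> eps u = 1"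
proof -
  have "u = tapply (\<lambda>l. scale (eps (l ! 0)) (l ! 1)) (Delta u)"
    using counit[of u] by (simp add: tapply_def)
  also have "\<dots> = tapply (\<lambda>l. scale (eps (l ! 0)) (l ! 1)) [[u, u]]"
    by (rule mlin_teq[OF mlin_counit Du]) (auto simp: Dlen)
  also have "\<dots> = scale (eps u) u" by simp
  finally have "scale (eps u - 1) u = 0" by (simp add: scale_left_diff_distrib)
  then have "eps u - 1 = 0 \<or> u = 0" by (simp only: scale_eq_0_iff)
  then show ?thesis by (metis right_minus_eq)
qed

end



locale asmag = asmag0 scale mult u Delta eps
  for scale :: "'k::field \<Rightarrow> 'a::ab_group_add \<Rightarrow> 'a" and mult :: "'a \<Rightarrow> 'a \<Rightarrow> 'a"
    and u :: 'a and Delta :: "'a \<Rightarrow> 'a list list" and eps :: "'a \<Rightarrow> 'k" +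
  assumes conn: "connected_bialg scale u Delta eps"
    and epsu: "eps u = 1"
begin

abbreviation "D \<equiv> rcoprod scale eps u Delta"
abbreviation "dp \<equiv> dpow scale eps u Delta"
abbreviation "pr \<equiv> proj scale eps u"

lemma pr_add: "pr (a + b) = pr a + pr b"
  by (simp add: proj_def eps_add scale_left_distrib)
lemma pr_scale: "pr (scale c a) = scale c (pr a)"
  by (simp add: proj_def eps_scale scale_right_diff_distrib)
lemma eps_diff: "eps (a - b) = eps a - eps b"
  using eps_add[of "a - b" b] by simp
lemma eps_pr[simp]: "eps (pr a) = 0"
  by (simp add: proj_def eps_diff eps_scale epsu)
lemma pr_u[simp]: "pr u = 0"
  by (simp add: proj_def epsu)
lemma pr_id: "eps a = 0 \<Longrightarrow> pr a = a"
  by (simp add: proj_def)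

lemma D_set: "l \<in> set (D x) \<Longrightarrow> length l = 2 \<and> (\<forall>z\<in>set l. eps z = 0)"
  by (auto simp: rcoprod_def Dlen)

lemma D_len: "l \<in> set (D x) \<Longrightarrow> length l = 2"
  using D_set by blast

lemma D_h: "l \<in> set (D x) \<Longrightarrow> z \<in> set l \<Longrightarrow> eps z = 0"
  using D_set by blast

lemma len2: "length l = 2 \<Longrightarrow> l = [l ! 0, l ! 1]"
  by (cases l; cases "tl l") auto

lemma mlin_pr: assumes "mlin scale k g" shows "mlin scale k (\<lambda>l. g (map pr l))"
proof (rule mlinI)
  fix xs ys :: "'a list" and a b assume "length xs + length ys + 1 = k"
  then show "g (map pr (xs @ [a + b] @ ys)) = g (map pr (xs @ [a] @ ys)) + g (map pr (xs @ [b] @ ys))"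
    using mlinD(1)[OF assms, of "map pr xs" "map pr ys" "pr a" "pr b"] by (simp add: pr_add)
next
  fix xs ys :: "'a list" and c a assume "length xs + length ys + 1 = k"
  then show "g (map pr (xs @ [scale c a] @ ys)) = scale c (g (map pr (xs @ [a] @ ys)))"
    using mlinD(2)[OF assms, of "map pr xs" "map pr ys" c "pr a"] by (simp add: pr_scale)
qed

lemma KD: assumes "\<And>a. h [a, 0] = 0" "\<And>a. h [0, a] = 0"
  shows "tapply h (D y) = tapply (\<lambda>l. h (map pr l)) (Delta y)"
  by (simp add: rcoprod_def tapply_map assms)

lemma Delta_add: assumes "mlin scale 2 h" shows "tapply h (Delta (a + b)) = tapply h (Delta a) + tapply h (Delta b)"
proof -
  have "tapply h (Delta (a + b)) = tapply h (Delta a @ Delta b)"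
    by (rule mlin_teq[OF assms Dadd]) (auto simp: Dlen)
  then show ?thesis by simp
qed

lemma Delta_scale: assumes "mlin scale 2 h" shows "tapply h (Delta (scale c a)) = scale c (tapply h (Delta a))"
proof -
  have "tapply h (Delta (scale c a)) = tapply h (map (\<lambda>l. scale c (l ! 0) # tl l) (Delta a))"
    by (rule mlin_teq[OF assms Dscale]) (auto simp: Dlen)
  also have "\<dots> = tapply (\<lambda>l. scale c (h l)) (Delta a)"
    unfolding tapply_map
  proof (rule tapply_cong)
    fix l assume "l \<in> set (Delta a)"
    then obtain p q where l: "l = [p, q]" using Dlen len2 by metis
    show "h (scale c (l ! 0) # tl l) = scale c (h l)"
      using mlinD(2)[OF assms, of "[]" "[q]" c p] l by simp
  qed
  also have "\<dots> = scale c (tapply h (Delta a))" by (rule tapply_scale)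
  finally show ?thesis .
qed

lemma zero_entries: "mlin scale 2 h \<Longrightarrow> h [a, 0] = 0 \<and> h [0, a] = 0"
  using mlin_zero[of 2 h "[a]" "[]"] mlin_zero[of 2 h "[]" "[a]"] by simp

lemma D_add: "mlin scale 2 h \<Longrightarrow> tapply h (D (a + b)) = tapply h (D a) + tapply h (D b)"
  using zero_entries[of h] by (simp add: KD Delta_add mlin_pr)

lemma D_scale: "mlin scale 2 h \<Longrightarrow> tapply h (D (scale c a)) = scale c (tapply h (D a))"
  using zero_entries[of h] by (simp add: KD Delta_scale mlin_pr)

lemma D_u: assumes "mlin scale 2 h" shows "tapply h (D u) = 0"
proof -
  have "tapply h (D u) = tapply (\<lambda>l. h (map pr l)) (Delta u)"
    using zero_entries[OF assms] by (simp add: KD)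
  also have "\<dots> = tapply (\<lambda>l. h (map pr l)) [[u, u]]"
    by (rule mlin_teq[OF mlin_pr[OF assms] Du]) (auto simp: Dlen)
  also have "\<dots> = 0" using zero_entries[OF assms] by simp
  finally show ?thesis .
qed

lemma D_pr: assumes "mlin scale 2 h" shows "tapply h (D (pr a)) = tapply h (D a)"
proof -
  have "pr a = a + scale (- eps a) u" by (simp add: proj_def)
  then have "tapply h (D (pr a)) = tapply h (D (a + scale (- eps a) u))" by (simp only:)
  also have "\<dots> = tapply h (D a) + scale (- eps a) (tapply h (D u))"
    by (simp only: D_add[OF assms] D_scale[OF assms])
  also have "\<dots> = tapply h (D a)" by (simp add: D_u[OF assms])
  finally show ?thesis .
qed

end



lemma mlinD': "mlin scale k g \<Longrightarrow> Suc (length xs + length ys) = k \<Longrightarrow> g (xs @ (a + b) # ys) = g (xs @ a # ys) + g (xs @ b # ys)"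
  "mlin scale k g \<Longrightarrow> Suc (length xs + length ys) = k \<Longrightarrow> g (xs @ scale c a # ys) = scale c (g (xs @ a # ys))"
  using mlinD[of scale k g xs ys] by auto

lemma mlin_app_r: assumes "mlin scale k g" "k = n + length zs" shows "mlin scale n (\<lambda>p. g (p @ zs))"
  by (rule mlinI) (use mlinD[OF assms(1)] assms(2) in auto)

lemma tapply_tmap0: "tapply g (tmap_slot 0 f ts) = tapply (\<lambda>l. tapply (\<lambda>p. g (p @ drop 1 l)) (f (l ! 0))) ts"
  by (simp add: tapply_tmap)

context asmag begin

lemma dp_len: "l \<in> set (dp n x) \<Longrightarrow> length l = Suc n"
proof (induction n arbitrary: l)
  case 0 then show ?case by simp
next
  case (Suc n)
  then obtain l0 p where "l0 \<in> set (dp n x)" "p \<in> set (D (l0 ! 0))" "l = take 0 l0 @ p @ drop (Suc 0) l0"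
    using tmap_slot_set[of l 0 D "dp n x"] Suc.prems by auto
  then show ?case using Suc.IH D_len by auto
qed

lemma dp_h: "eps x = 0 \<Longrightarrow> l \<in> set (dp n x) \<Longrightarrow> z \<in> set l \<Longrightarrow> eps z = 0"
proof (induction n arbitrary: l)
  case 0 then show ?case by simp
next
  case (Suc n)
  then obtain l0 p where l0: "l0 \<in> set (dp n x)" "p \<in> set (D (l0 ! 0))" "l = take 0 l0 @ p @ drop (Suc 0) l0"
    using tmap_slot_set[of l 0 D "dp n x"] Suc.prems by auto
  then have "z \<in> set p \<or> z \<in> set l0" using Suc.prems(3) by (auto dest: in_set_dropD)
  then show ?case using Suc.IH[OF Suc.prems(1) l0(1)] D_h l0(2) by blast
qed

lemma mlin_c0: assumes g: "mlin scale (Suc (Suc k)) g"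
  shows "mlin scale (Suc k) (\<lambda>l. tapply (\<lambda>p. g (p @ drop 1 l)) (D (l ! 0)))"
proof (rule mlinI)
  fix xs ys :: "'a list" and a b assume len: "length xs + length ys + 1 = Suc k"
  show "tapply (\<lambda>p. g (p @ drop 1 (xs @ [a + b] @ ys))) (D ((xs @ [a + b] @ ys) ! 0)) =
        tapply (\<lambda>p. g (p @ drop 1 (xs @ [a] @ ys))) (D ((xs @ [a] @ ys) ! 0)) +
        tapply (\<lambda>p. g (p @ drop 1 (xs @ [b] @ ys))) (D ((xs @ [b] @ ys) ! 0))"
  proof (cases xs)
    case Nil
    have "mlin scale 2 (\<lambda>p. g (p @ ys))" by (rule mlin_app_r[OF g]) (use len Nil in simp)
    then show ?thesis using Nil by (simp add: D_add)
  next
    case (Cons x xs')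
    have "tapply (\<lambda>p. g (p @ xs' @ (a + b) # ys)) (D x) =
          tapply (\<lambda>p. g (p @ xs' @ a # ys) + g (p @ xs' @ b # ys)) (D x)"
    proof (rule tapply_cong)
      fix p assume "p \<in> set (D x)"
      then have "length p = 2" by (rule D_len)
      then show "g (p @ xs' @ (a + b) # ys) = g (p @ xs' @ a # ys) + g (p @ xs' @ b # ys)"
        using mlinD'(1)[OF g, of "p @ xs'" ys a b] len Cons by simp
    qed
    then show ?thesis using Cons by (simp add: tapply_add)
  qed
next
  fix xs ys :: "'a list" and c a assume len: "length xs + length ys + 1 = Suc k"
  show "tapply (\<lambda>p. g (p @ drop 1 (xs @ [scale c a] @ ys))) (D ((xs @ [scale c a] @ ys) ! 0)) =
        scale c (tapply (\<lambda>p. g (p @ drop 1 (xs @ [a] @ ys))) (D ((xs @ [a] @ ys) ! 0)))"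
  proof (cases xs)
    case Nil
    have "mlin scale 2 (\<lambda>p. g (p @ ys))" by (rule mlin_app_r[OF g]) (use len Nil in simp)
    then show ?thesis using Nil by (simp add: D_scale)
  next
    case (Cons x xs')
    have "tapply (\<lambda>p. g (p @ xs' @ scale c a # ys)) (D x) =
          tapply (\<lambda>p. scale c (g (p @ xs' @ a # ys))) (D x)"
    proof (rule tapply_cong)
      fix p assume "p \<in> set (D x)"
      then have "length p = 2" by (rule D_len)
      then show "g (p @ xs' @ scale c a # ys) = scale c (g (p @ xs' @ a # ys))"
        using mlinD'(2)[OF g, of "p @ xs'" ys c a] len Cons by simp
    qed
    then show ?thesis using Cons by (simp add: tapply_scale)
  qed
qed

lemma dp_Suc: "tapply g (dp (Suc n) y) = tapply (\<lambda>l. tapply (\<lambda>p. g (p @ drop 1 l)) (D (l ! 0))) (dp n y)"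
  by (simp add: tapply_tmap0)

lemma dp_Suc_right: "tapply g (dp (Suc n) y) = tapply (\<lambda>l. tapply (\<lambda>q. g (q @ drop 1 l)) (dp n (l ! 0))) (D y)"
proof (induction n arbitrary: g)
  case 0
  have "tapply g (dp (Suc 0) y) = tapply g (D y)" by (simp add: tapply_tmap0)
  also have "\<dots> = tapply (\<lambda>l. tapply (\<lambda>q. g (q @ drop 1 l)) (dp 0 (l ! 0))) (D y)"
  proof (rule tapply_cong)
    fix l assume "l \<in> set (D y)"
    then have "length l = 2" by (rule D_len)
    then have "l ! 0 # drop 1 l = l" by (cases l) auto
    then show "g l = tapply (\<lambda>q. g (q @ drop 1 l)) (dp 0 (l ! 0))" by simp
  qed
  finally show ?case .
next
  case (Suc n)
  have "tapply g (dp (Suc (Suc n)) y) = tapply (\<lambda>l. tapply (\<lambda>p. g (p @ drop 1 l)) (D (l ! 0))) (dp (Suc n) y)"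
    by (rule dp_Suc)
  also have "\<dots> = tapply (\<lambda>l. tapply (\<lambda>q. tapply (\<lambda>p. g (p @ drop 1 (q @ drop 1 l))) (D ((q @ drop 1 l) ! 0))) (dp n (l ! 0))) (D y)"
    by (rule Suc.IH)
  also have "\<dots> = tapply (\<lambda>l. tapply (\<lambda>q. g (q @ drop 1 l)) (dp (Suc n) (l ! 0))) (D y)"
  proof (rule tapply_cong)
    fix l assume "l \<in> set (D y)"
    show "tapply (\<lambda>q. tapply (\<lambda>p. g (p @ drop 1 (q @ drop 1 l))) (D ((q @ drop 1 l) ! 0))) (dp n (l ! 0)) =
          tapply (\<lambda>q. g (q @ drop 1 l)) (dp (Suc n) (l ! 0))"
      unfolding dp_Suc
    proof (rule tapply_cong)
      fix q assume "q \<in> set (dp n (l ! 0))"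
      then have "length q = Suc n" by (rule dp_len)
      then obtain q0 qs where "q = q0 # qs" by (cases q) auto
      then show "tapply (\<lambda>p. g (p @ drop 1 (q @ drop 1 l))) (D ((q @ drop 1 l) ! 0)) =
                 tapply (\<lambda>p. g ((p @ drop 1 q) @ drop 1 l)) (D (q ! 0))" by simp
    qed
  qed
  finally show ?case .
qed

lemma dp_add: "mlin scale (Suc n) g \<Longrightarrow> tapply g (dp n (a + b)) = tapply g (dp n a) + tapply g (dp n b)"
proof (induction n arbitrary: g)
  case 0 then show ?case using mlinD'(1)[of scale 1 g "[]" "[]" a b] by simp
next
  case (Suc n)
  show ?case unfolding dp_Suc by (rule Suc.IH[OF mlin_c0[OF Suc.prems]])
qed

lemma dp_scale: "mlin scale (Suc n) g \<Longrightarrow> tapply g (dp n (scale c a)) = scale c (tapply g (dp n a))"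
proof (induction n arbitrary: g)
  case 0 then show ?case using mlinD'(2)[of scale 1 g "[]" "[]" c a] by simp
next
  case (Suc n)
  show ?case unfolding dp_Suc by (rule Suc.IH[OF mlin_c0[OF Suc.prems]])
qed

lemma dp_zero: "teq scale (dp c y) [] \<Longrightarrow> c \<le> n \<Longrightarrow> mlin scale (Suc n) g \<Longrightarrow> tapply g (dp n y) = 0"
proof (induction n arbitrary: g)
  case 0
  then have "tapply g (dp 0 y) = tapply g []" by (intro mlin_teq[of 1]) auto
  then show ?case by simp
next
  case (Suc n)
  show ?case
  proof (cases "c = Suc n")
    case True
    then have "tapply g (dp (Suc n) y) = tapply g []" using Suc.prems
      by (intro mlin_teq[of "Suc (Suc n)"]) (auto simp del: dpow.simps dest: dp_len)
    then show ?thesis by simp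
  next
    case False
    then show ?thesis unfolding dp_Suc using Suc.prems by (intro Suc.IH mlin_c0) auto
  qed
qed

end



context asmag begin

lemma lcomb_snoc: "xs \<noteq> [] \<Longrightarrow> lcomb mult (xs @ [b]) = mult (lcomb mult xs) b"
  by (cases xs) auto

lemma lcomb_lin: "lcomb mult (xs @ (a + b) # ys) = lcomb mult (xs @ a # ys) + lcomb mult (xs @ b # ys)"
  "lcomb mult (xs @ scale c a # ys) = scale c (lcomb mult (xs @ a # ys))"
proof (induction ys rule: rev_induct)
  case Nil
  { case 1 show ?case by (cases "xs = []") (simp_all add: lcomb_snoc[of xs] mult_r) }
  { case 2 show ?case by (cases "xs = []") (simp_all add: lcomb_snoc[of xs] mult_r) }
next
  case (snoc y ys)
  { case 1
    have "lcomb mult (xs @ (a + b) # ys @ [y]) = mult (lcomb mult (xs @ (a + b) # ys)) y"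
      using lcomb_snoc[of "xs @ (a + b) # ys" y] by simp
    also have "\<dots> = lcomb mult (xs @ a # ys @ [y]) + lcomb mult (xs @ b # ys @ [y])"
      using snoc(1) lcomb_snoc[of "xs @ a # ys" y] lcomb_snoc[of "xs @ b # ys" y] by (simp add: mult_l)
    finally show ?case . }
  { case 2
    have "lcomb mult (xs @ scale c a # ys @ [y]) = mult (lcomb mult (xs @ scale c a # ys)) y"
      using lcomb_snoc[of "xs @ scale c a # ys" y] by simp
    also have "\<dots> = scale c (lcomb mult (xs @ a # ys @ [y]))"
      using snoc(2) lcomb_snoc[of "xs @ a # ys" y] by (simp add: mult_l)
    finally show ?case . }
qed

lemma mlin_lcomb: "mlin scale k (lcomb mult)"
  by (rule mlinI) (simp_all add: lcomb_lin)

lemma rcomb_cons: "ys \<noteq> [] \<Longrightarrow> rcomb mult (x # ys) = mult x (rcomb mult ys)"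
  by (cases ys) auto

lemma rcomb_lin: "rcomb mult (xs @ (a + b) # ys) = rcomb mult (xs @ a # ys) + rcomb mult (xs @ b # ys)"
  "rcomb mult (xs @ scale c a # ys) = scale c (rcomb mult (xs @ a # ys))"
proof (induction xs)
  case Nil
  { case 1 show ?case by (cases "ys = []") (simp_all add: rcomb_cons mult_l) }
  { case 2 show ?case by (cases "ys = []") (simp_all add: rcomb_cons mult_l) }
next
  case (Cons x xs)
  { case 1 show ?case using Cons(1) by (simp add: rcomb_cons mult_r) }
  { case 2 show ?case using Cons(2) by (simp add: rcomb_cons mult_r) }
qed

lemma mlin_rcomb: "mlin scale k (rcomb mult)"
  by (rule mlinI) (simp_all add: rcomb_lin)

lemma rcomb_snoc_mult: "rcomb mult (as @ [mult a b]) = rcomb mult (as @ [a, b])"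
  by (induction as) (simp_all add: rcomb_cons)

abbreviation "cd \<equiv> cdeg scale eps u Delta"
abbreviation "E \<equiv> eproj scale mult eps u Delta"
abbreviation "L n y \<equiv> tapply (lcomb mult) (dp n y)"

lemma cd_teq: assumes "eps y = 0" shows "teq scale (dp (cd y) y) []"
proof -
  have "\<exists>N. \<forall>n\<ge>N. teq scale (dp n y) []" using conn assms unfolding connected_bialg_def by blast
  then obtain N where "\<forall>n\<ge>N. teq scale (dp n y) []" by blast
  then have "teq scale (dp N y) []" by blast
  then show ?thesis unfolding cdeg_def by (rule LeastI)
qed

lemma L_vanish: "eps y = 0 \<Longrightarrow> cd y \<le> n \<Longrightarrow> mlin scale (Suc n) g \<Longrightarrow> tapply g (dp n y) = 0"
  by (rule dp_zero[OF cd_teq])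

lemma E_alt: assumes "eps y = 0" "cd y \<le> Suc M"
  shows "E y = y + (\<Sum>k<M. scale ((-1) ^ Suc k) (L (Suc k) y))"
proof -
  have "(\<Sum>n\<in>{1..<cd y}. scale ((-1) ^ n) (L n y)) = (\<Sum>n\<in>{1..<Suc M}. scale ((-1) ^ n) (L n y))"
  proof (rule sum.mono_neutral_left)
    show "\<forall>i\<in>{1..<Suc M} - {1..<cd y}. scale ((-1) ^ i) (L i y) = 0"
      using L_vanish[OF assms(1) _ mlin_lcomb] by auto
  qed (use assms in auto)
  also have "\<dots> = (\<Sum>k<M. scale ((-1) ^ Suc k) (L (Suc k) y))"
    by (simp only: One_nat_def sum.shift_bounds_Suc_ivl atLeast0LessThan)
  finally show ?thesis by (simp only: eproj_def)
qed

lemma L0[simp]: "L 0 y = y" by simp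

lemma E_alt2: assumes "eps y = 0" "cd y \<le> Suc M"
  shows "E y = (\<Sum>k<Suc M. scale ((-1) ^ k) (L k y))"
  unfolding sum.lessThan_Suc_shift E_alt[OF assms] by simp

lemma E_add: assumes "eps a = 0" "eps b = 0" shows "E (a + b) = E a + E b"
proof -
  let ?M = "cd a + cd b + cd (a + b)"
  have ab: "eps (a + b) = 0" using assms by (simp add: eps_add)
  have 1: "E (a + b) = a + b + (\<Sum>k<?M. scale ((-1) ^ Suc k) (L (Suc k) (a + b)))"
    by (rule E_alt[OF ab]) simp
  have 2: "E a = a + (\<Sum>k<?M. scale ((-1) ^ Suc k) (L (Suc k) a))"
    by (rule E_alt[OF assms(1)]) simp
  have 3: "E b = b + (\<Sum>k<?M. scale ((-1) ^ Suc k) (L (Suc k) b))"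
    by (rule E_alt[OF assms(2)]) simp
  show ?thesis unfolding 1 2 3
    by (simp only: dp_add[OF mlin_lcomb] scale_right_distrib sum.distrib add_ac)
qed

lemma E_scale: assumes "eps a = 0" shows "E (scale c a) = scale c (E a)"
proof -
  let ?M = "cd a + cd (scale c a)"
  have ab: "eps (scale c a) = 0" using assms by (simp add: eps_scale)
  have 1: "E (scale c a) = scale c a + (\<Sum>k<?M. scale ((-1) ^ Suc k) (L (Suc k) (scale c a)))"
    by (rule E_alt[OF ab]) simp
  have 2: "E a = a + (\<Sum>k<?M. scale ((-1) ^ Suc k) (L (Suc k) a))"
    by (rule E_alt[OF assms(1)]) simp
  show ?thesis unfolding 1 2
    by (simp only: dp_scale[OF mlin_lcomb] scale_right_distrib scale_sum_right scale_left_commute[of _ c])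
qed

end



lemma mlin_app_l: fixes scale :: "'k::field \<Rightarrow> 'a::ab_group_add \<Rightarrow> 'a" and g :: "'a list \<Rightarrow> 'a"
  assumes "mlin scale k g" "k = length zs + n" shows "mlin scale n (\<lambda>p. g (zs @ p))"
proof (rule mlinI)
  fix xs ys :: "'a list" and a b assume "length xs + length ys + 1 = n"
  then show "g (zs @ xs @ [a + b] @ ys) = g (zs @ xs @ [a] @ ys) + g (zs @ xs @ [b] @ ys)"
    using mlinD(1)[OF assms(1), of "zs @ xs" ys a b] assms(2) by simp
next
  fix xs ys :: "'a list" and c a assume "length xs + length ys + 1 = n"
  then show "g (zs @ xs @ [scale c a] @ ys) = scale c (g (zs @ xs @ [a] @ ys))"
    using mlinD(2)[OF assms(1), of "zs @ xs" ys c a] assms(2) by simp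
qed

context asmag begin

lemma mlin_zero': "mlin scale k g \<Longrightarrow> Suc (length xs + length ys) = k \<Longrightarrow> g (xs @ 0 # ys) = 0"
  using mlin_zero[of k g xs ys] by simp

lemma D_zero: assumes "mlin scale 2 h" shows "tapply h (D 0) = 0"
  using D_scale[OF assms, of 0 0] by simp

lemma E_zero: "E 0 = 0"
  using E_scale[of 0 0] by simp

lemma E_pr_add: "E (pr (a + b)) = E (pr a) + E (pr b)"
  by (simp add: pr_add E_add)

lemma E_pr_scale: "E (pr (scale c a)) = scale c (E (pr a))"
  by (simp add: pr_scale E_scale)

lemma tapply_neg: "tapply (\<lambda>l. - g l) ts = - tapply g ts"
  using tapply_diff[of "\<lambda>l. 0" g ts] by simp

lemma Lsucc: "L (Suc n) y = tapply (\<lambda>l. mult (L n (l ! 0)) (l ! 1)) (D y)"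
  unfolding dp_Suc_right
proof (rule tapply_cong)
  fix l assume "l \<in> set (D y)"
  then have "length l = 2" by (rule D_len)
  then have dl: "drop 1 l = [l ! 1]" by (cases l; cases "tl l") auto
  have "tapply (\<lambda>q. lcomb mult (q @ drop 1 l)) (dp n (l ! 0)) = tapply (\<lambda>q. mult (lcomb mult q) (l ! 1)) (dp n (l ! 0))"
    unfolding dl by (rule tapply_cong) (metis lcomb_snoc dp_len list.size(3) nat.distinct(1))
  also have "\<dots> = mult (L n (l ! 0)) (l ! 1)"
    by (rule tapply_additive[symmetric]) (rule mult_l(1))
  finally show "tapply (\<lambda>q. lcomb mult (q @ drop 1 l)) (dp n (l ! 0)) = mult (L n (l ! 0)) (l ! 1)" .
qed

lemma F1: assumes y: "eps y = 0" shows "y = E y + tapply (\<lambda>l. mult (E (l ! 0)) (l ! 1)) (D y)"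
proof -
  define M where "M = cd y + Max (insert 0 ((\<lambda>l. cd (l ! 0)) ` set (D y)))"
  have cdl: "cd (l ! 0) \<le> Suc M" if "l \<in> set (D y)" for l
  proof -
    have "cd (l ! 0) \<le> Max (insert 0 ((\<lambda>l. cd (l ! 0)) ` set (D y)))"
      using that by (intro Max_ge) auto
    then show ?thesis unfolding M_def by simp
  qed
  have epsl: "eps (l ! 0) = 0" if "l \<in> set (D y)" for l
    using that D_h[OF that] D_len[OF that] by (simp add: nth_mem)
  have El: "mult (E (l ! 0)) (l ! 1) = - (\<Sum>k<Suc M. scale ((-1) ^ Suc k) (mult (L k (l ! 0)) (l ! 1)))"
    if "l \<in> set (D y)" for l
  proof -
    have "mult (E (l ! 0)) (l ! 1) = mult (\<Sum>k<Suc M. scale ((-1) ^ k) (L k (l ! 0))) (l ! 1)"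
      using E_alt2[OF epsl[OF that] cdl[OF that]] by simp
    also have "\<dots> = (\<Sum>k<Suc M. mult (scale ((-1) ^ k) (L k (l ! 0))) (l ! 1))"
      by (rule additive_sum) (rule mult_l(1))
    also have "\<dots> = (\<Sum>k<Suc M. scale ((-1) ^ k) (mult (L k (l ! 0)) (l ! 1)))"
      by (simp only: mult_l(2))
    also have "\<dots> = - (\<Sum>k<Suc M. scale ((-1) ^ Suc k) (mult (L k (l ! 0)) (l ! 1)))"
      by (simp add: sum_negf)
    finally show ?thesis .
  qed
  have "E y = y + (\<Sum>k<Suc M. scale ((-1) ^ Suc k) (L (Suc k) y))"
    by (rule E_alt[OF y]) (simp add: M_def)
  also have "(\<Sum>k<Suc M. scale ((-1) ^ Suc k) (L (Suc k) y))
      = (\<Sum>k<Suc M. tapply (\<lambda>l. scale ((-1) ^ Suc k) (mult (L k (l ! 0)) (l ! 1))) (D y))"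
    by (simp only: Lsucc tapply_scale)
  also have "\<dots> = tapply (\<lambda>l. \<Sum>k<Suc M. scale ((-1) ^ Suc k) (mult (L k (l ! 0)) (l ! 1))) (D y)"
    by (rule tapply_sum[symmetric])
  also have "\<dots> = tapply (\<lambda>l. - mult (E (l ! 0)) (l ! 1)) (D y)"
  proof (rule tapply_cong)
    fix l assume "l \<in> set (D y)"
    then show "(\<Sum>k<Suc M. scale ((-1) ^ Suc k) (mult (L k (l ! 0)) (l ! 1))) = - mult (E (l ! 0)) (l ! 1)"
      by (simp only: El minus_minus)
  qed
  also have "\<dots> = - tapply (\<lambda>l. mult (E (l ! 0)) (l ! 1)) (D y)"
    by (rule tapply_neg)
  finally show ?thesis by simp
qed

end



context asmag begin

lemma dp1: "tapply h (dp (Suc 0) x) = tapply h (D x)"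
  by (simp add: tapply_tmap0)

lemma len2E: assumes "length l = 2" obtains a b where "l = [a, b]"
  using assms len2 by metis

lemma inner_pr: assumes "mlin scale 2 h" shows "tapply h (D (pr z)) = tapply (\<lambda>q. h (map pr q)) (Delta z)"
  using zero_entries[OF assms] by (simp add: D_pr[OF assms] KD)

lemma tmap_len: assumes "\<forall>l\<in>set ts. length l = 2" "l \<in> set (tmap_slot i Delta ts)" "i < 2"
  shows "length l = 3"
proof -
  obtain l0 p where "l0 \<in> set ts" "p \<in> set (Delta (l0 ! i))" "l = take i l0 @ p @ drop (Suc i) l0"
    using tmap_slot_set[OF assms(2)] by blast
  then show ?thesis using assms(1,3) Dlen by auto
qed

lemma coassD: assumes g: "mlin scale 3 g"
  shows "tapply (\<lambda>l. tapply (\<lambda>p. g (l ! 0 # p)) (D (l ! 1))) (D x) =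
         tapply (\<lambda>l. tapply (\<lambda>p. g (p @ [l ! 1])) (D (l ! 0))) (D x)"
proof -
  have gp: "mlin scale 3 (\<lambda>l. g (map pr l))" by (rule mlin_pr[OF g])
  have m2a: "mlin scale 2 (\<lambda>p. g (c # p))" for c using mlin_app_l[OF g, of "[c]" 2] by simp
  have m2b: "mlin scale 2 (\<lambda>p. g (p @ [c]))" for c using mlin_app_r[OF g, of 2 "[c]"] by simp
  have z: "tapply (\<lambda>p. g (0 # p)) (D a) = 0" "tapply (\<lambda>p. g (p @ [0])) (D a) = 0" for a
  proof -
    have "tapply (\<lambda>p. g (0 # p)) (D a) = tapply (\<lambda>p. 0) (D a)"
      by (rule tapply_cong) (use mlin_zero'[OF g, of "[]"] D_len in auto)
    then show "tapply (\<lambda>p. g (0 # p)) (D a) = 0" by simp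
    have "tapply (\<lambda>p. g (p @ [0])) (D a) = tapply (\<lambda>p. 0) (D a)"
      by (rule tapply_cong) (use mlin_zero'[OF g, of _ "[]"] D_len in auto)
    then show "tapply (\<lambda>p. g (p @ [0])) (D a) = 0" by simp
  qed
  have "tapply (\<lambda>l. tapply (\<lambda>p. g (l ! 0 # p)) (D (l ! 1))) (D x)
      = tapply (\<lambda>l. tapply (\<lambda>p. g ((map pr l) ! 0 # p)) (D ((map pr l) ! 1))) (Delta x)"
    by (rule KD) (simp_all add: z D_zero[OF m2a])
  also have "\<dots> = tapply (\<lambda>l. tapply (\<lambda>q. g (pr (l ! 0) # map pr q)) (Delta (l ! 1))) (Delta x)"
  proof (rule tapply_cong)
    fix l assume "l \<in> set (Delta x)"
    then obtain a b where l: "l = [a, b]" using Dlen len2E by metis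
    show "tapply (\<lambda>p. g ((map pr l) ! 0 # p)) (D ((map pr l) ! 1)) = tapply (\<lambda>q. g (pr (l ! 0) # map pr q)) (Delta (l ! 1))"
      using inner_pr[OF m2a] l by simp
  qed
  also have "\<dots> = tapply (\<lambda>l. g (map pr l)) (tmap_slot 1 Delta (Delta x))"
    unfolding tapply_tmap
  proof (rule tapply_cong)
    fix l assume "l \<in> set (Delta x)"
    then obtain a b where l: "l = [a, b]" using Dlen len2E by metis
    show "tapply (\<lambda>q. g (pr (l ! 0) # map pr q)) (Delta (l ! 1)) =
          tapply (\<lambda>p. g (map pr (take 1 l @ p @ drop (Suc 1) l))) (Delta (l ! 1))"
      using l by simp
  qed
  also have "\<dots> = tapply (\<lambda>l. g (map pr l)) (tmap_slot 0 Delta (Delta x))"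
    by (rule mlin_teq[OF gp coass, symmetric]) (use tmap_len[of "Delta x" _ 0] tmap_len[of "Delta x" _ 1] Dlen in auto)
  also have "\<dots> = tapply (\<lambda>l. tapply (\<lambda>q. g (map pr q @ [pr (l ! 1)])) (Delta (l ! 0))) (Delta x)"
    unfolding tapply_tmap
  proof (rule tapply_cong)
    fix l assume "l \<in> set (Delta x)"
    then obtain a b where l: "l = [a, b]" using Dlen len2E by metis
    show "tapply (\<lambda>p. g (map pr (take 0 l @ p @ drop (Suc 0) l))) (Delta (l ! 0)) =
          tapply (\<lambda>q. g (map pr q @ [pr (l ! 1)])) (Delta (l ! 0))"
      using l by simp
  qed
  also have "\<dots> = tapply (\<lambda>l. tapply (\<lambda>p. g (p @ [(map pr l) ! 1])) (D ((map pr l) ! 0))) (Delta x)"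
  proof (rule tapply_cong)
    fix l assume "l \<in> set (Delta x)"
    then obtain a b where l: "l = [a, b]" using Dlen len2E by metis
    show "tapply (\<lambda>q. g (map pr q @ [pr (l ! 1)])) (Delta (l ! 0)) = tapply (\<lambda>p. g (p @ [(map pr l) ! 1])) (D ((map pr l) ! 0))"
      using inner_pr[OF m2b] l by simp
  qed
  also have "\<dots> = tapply (\<lambda>l. tapply (\<lambda>p. g (p @ [l ! 1])) (D (l ! 0))) (D x)"
    by (rule KD[symmetric]) (simp_all add: z D_zero[OF m2b])
  finally show ?thesis .
qed

end



context asmag begin

lemma GC: "mlin scale (Suc (Suc n)) g \<Longrightarrow>
  tapply (\<lambda>l. tapply (\<lambda>p. g (butlast l @ p)) (D (last l))) (dp n x) = tapply g (dp (Suc n) x)"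
proof (induction n arbitrary: g rule: less_induct)
  case (less n)
  consider "n = 0" | "n = Suc 0" | m where "n = Suc (Suc m)"
    by (metis not0_implies_Suc)
  then show ?case
  proof cases
    case 1 then show ?thesis by (simp add: tapply_tmap0)
  next
    case 2
    have g3: "mlin scale 3 g" using less.prems 2 by (simp add: numeral_3_eq_3)
    have "tapply (\<lambda>l. tapply (\<lambda>p. g (butlast l @ p)) (D (last l))) (dp n x)
        = tapply (\<lambda>l. tapply (\<lambda>p. g (l ! 0 # p)) (D (l ! 1))) (D x)"
      unfolding 2 dp1
    proof (rule tapply_cong)
      fix l assume "l \<in> set (D x)"
      then obtain a b where l: "l = [a, b]" using D_len len2E by metis
      then show "tapply (\<lambda>p. g (butlast l @ p)) (D (last l)) = tapply (\<lambda>p. g (l ! 0 # p)) (D (l ! 1))" by simp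
    qed
    also have "\<dots> = tapply (\<lambda>l. tapply (\<lambda>p. g (p @ [l ! 1])) (D (l ! 0))) (D x)"
      by (rule coassD[OF g3])
    also have "\<dots> = tapply g (dp (Suc n) x)"
      unfolding 2 dp_Suc[of g] dp1
    proof (rule tapply_cong)
      fix l assume "l \<in> set (D x)"
      then obtain a b where l: "l = [a, b]" using D_len len2E by metis
      then show "tapply (\<lambda>p. g (p @ [l ! 1])) (D (l ! 0)) = tapply (\<lambda>p. g (p @ drop 1 l)) (D (l ! 0))" by simp
    qed
    finally show ?thesis .
  next
    case 3
    define g1 where "g1 = (\<lambda>l'. tapply (\<lambda>q. g (q @ drop 1 l')) (D (l' ! 0)))"
    have g1: "mlin scale (Suc (Suc (Suc m))) g1"
      unfolding g1_def using mlin_c0[of "Suc (Suc m)" g] less.prems 3 by simp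
    have "tapply (\<lambda>l. tapply (\<lambda>p. g (butlast l @ p)) (D (last l))) (dp n x)
      = tapply (\<lambda>l. tapply (\<lambda>q. tapply (\<lambda>p. g (butlast (q @ drop 1 l) @ p)) (D (last (q @ drop 1 l)))) (D (l ! 0))) (dp (Suc m) x)"
      unfolding 3 dp_Suc ..
    also have "\<dots> = tapply (\<lambda>l. tapply (\<lambda>p. g1 (butlast l @ p)) (D (last l))) (dp (Suc m) x)"
    proof (rule tapply_cong)
      fix l assume "l \<in> set (dp (Suc m) x)"
      then have ll: "length l = Suc (Suc m)" by (rule dp_len)
      then have ne: "drop 1 l \<noteq> []" "butlast l \<noteq> []"
        by auto (metis length_butlast diff_Suc_1 list.size(3) nat.distinct(1))
      have "tapply (\<lambda>q. tapply (\<lambda>p. g (butlast (q @ drop 1 l) @ p)) (D (last (q @ drop 1 l)))) (D (l ! 0))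
          = tapply (\<lambda>q. tapply (\<lambda>p. g (q @ butlast (drop 1 l) @ p)) (D (last l))) (D (l ! 0))"
      proof (rule tapply_cong)
        fix q
        have "last (drop 1 l) = last l" using ne ll by (simp add: last_drop)
        then show "tapply (\<lambda>p. g (butlast (q @ drop 1 l) @ p)) (D (last (q @ drop 1 l))) =
                   tapply (\<lambda>p. g (q @ butlast (drop 1 l) @ p)) (D (last l))"
          using ne by (simp add: butlast_append last_append)
      qed
      also have "\<dots> = tapply (\<lambda>p. tapply (\<lambda>q. g (q @ butlast (drop 1 l) @ p)) (D (l ! 0))) (D (last l))"
        by (rule tapply_swap)
      also have "\<dots> = tapply (\<lambda>p. g1 (butlast l @ p)) (D (last l))"
      proof (rule tapply_cong)
        fix p
        have "(butlast l @ p) ! 0 = l ! 0" using ne ll by (simp add: nth_append nth_butlast)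
        moreover have "drop 1 (butlast l @ p) = butlast (drop 1 l) @ p"
          using ne ll by (simp add: butlast_drop)
        ultimately show "tapply (\<lambda>q. g (q @ butlast (drop 1 l) @ p)) (D (l ! 0)) = g1 (butlast l @ p)"
          unfolding g1_def by simp
      qed
      finally show "tapply (\<lambda>q. tapply (\<lambda>p. g (butlast (q @ drop 1 l) @ p)) (D (last (q @ drop 1 l)))) (D (l ! 0))
          = tapply (\<lambda>p. g1 (butlast l @ p)) (D (last l))" .
    qed
    also have "\<dots> = tapply g1 (dp (Suc (Suc m)) x)"
      by (rule less.IH) (use 3 g1 in auto)
    also have "\<dots> = tapply g (dp (Suc n) x)"
      unfolding 3 g1_def by (rule dp_Suc[symmetric])
    finally show ?thesis .
  qed
qed

end



context asmag begin

definition "Gf l = rcomb mult (map (\<lambda>z. E (pr z)) (butlast l) @ [last l])"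
definition "Rf l = rcomb mult (map (\<lambda>z. E (pr z)) l)"

lemma mlin_Gf: "mlin scale k Gf"
proof (rule mlinI)
  fix xs ys :: "'a list" and a b
  show "Gf (xs @ [a + b] @ ys) = Gf (xs @ [a] @ ys) + Gf (xs @ [b] @ ys)"
  proof (cases "ys = []")
    case True then show ?thesis by (simp add: Gf_def rcomb_lin(1)[of _ _ _ "[]", simplified])
  next
    case False then show ?thesis
      by (simp add: Gf_def butlast_append E_pr_add rcomb_lin(1)[of "map (\<lambda>z. E (pr z)) xs", simplified])
  qed
next
  fix xs ys :: "'a list" and c a
  show "Gf (xs @ [scale c a] @ ys) = scale c (Gf (xs @ [a] @ ys))"
  proof (cases "ys = []")
    case True then show ?thesis by (simp add: Gf_def rcomb_lin(2)[of _ _ _ "[]", simplified])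
  next
    case False then show ?thesis
      by (simp add: Gf_def butlast_append E_pr_scale rcomb_lin(2)[of "map (\<lambda>z. E (pr z)) xs", simplified])
  qed
qed

lemma claimC: assumes x: "eps x = 0"
  shows "tapply Gf (dp n x) = tapply Rf (dp n x) + tapply Gf (dp (Suc n) x)"
proof -
  have "tapply Gf (dp n x) = tapply (\<lambda>l. Rf l + tapply (\<lambda>p. Gf (butlast l @ p)) (D (last l))) (dp n x)"
  proof (rule tapply_cong)
    fix l assume l: "l \<in> set (dp n x)"
    then have ne: "l \<noteq> []" using dp_len by fastforce
    let ?z = "last l" and ?as = "map (\<lambda>z. E (pr z)) (butlast l)"
    have ez: "eps ?z = 0" using dp_h[OF x l] ne by simp
    have lz: "l = butlast l @ [?z]" using ne by simp
    have "Gf l = rcomb mult (?as @ [E ?z + tapply (\<lambda>p. mult (E (p ! 0)) (p ! 1)) (D ?z)])"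
      unfolding Gf_def using F1[OF ez] by simp
    also have "\<dots> = rcomb mult (?as @ [E ?z]) + rcomb mult (?as @ [tapply (\<lambda>p. mult (E (p ! 0)) (p ! 1)) (D ?z)])"
      using rcomb_lin(1)[of ?as _ _ "[]"] by simp
    also have "rcomb mult (?as @ [E ?z]) = Rf l"
      unfolding Rf_def by (subst (2) lz) (simp add: pr_id[OF ez])
    also have "rcomb mult (?as @ [tapply (\<lambda>p. mult (E (p ! 0)) (p ! 1)) (D ?z)])
        = tapply (\<lambda>p. rcomb mult (?as @ [mult (E (p ! 0)) (p ! 1)])) (D ?z)"
      by (rule tapply_additive) (use rcomb_lin(1)[of ?as _ _ "[]"] in simp)
    also have "\<dots> = tapply (\<lambda>p. Gf (butlast l @ p)) (D ?z)"
    proof (rule tapply_cong)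
      fix p assume p: "p \<in> set (D ?z)"
      then obtain p0 p1 where pp: "p = [p0, p1]" using D_len len2E by metis
      have "eps p0 = 0" using D_h[OF p] pp by simp
      then show "rcomb mult (?as @ [mult (E (p ! 0)) (p ! 1)]) = Gf (butlast l @ p)"
        unfolding Gf_def pp using rcomb_snoc_mult[of ?as "E p0" p1]
        by (simp add: butlast_append pr_id)
    qed
    finally show "Gf l = Rf l + tapply (\<lambda>p. Gf (butlast l @ p)) (D (last l))" .
  qed
  also have "\<dots> = tapply Rf (dp n x) + tapply Gf (dp (Suc n) x)"
    by (simp only: tapply_add GC[OF mlin_Gf])
  finally show ?thesis .
qed

lemma telescope: assumes x: "eps x = 0" shows "x = (\<Sum>k<n. tapply Rf (dp k x)) + tapply Gf (dp n x)"
proof (induction n)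
  case 0 then show ?case by (simp add: Gf_def)
next
  case (Suc n) then show ?case using claimC[OF x, of n] by (simp add: add_ac)
qed

lemma main_loc: assumes x: "eps x = 0" and N: "\<forall>n\<ge>N. teq scale (dp n x) []"
  shows "x = E x + (\<Sum>n\<in>{1..N}. tapply (\<lambda>l. rcomb mult (map E l)) (dp n x))"
proof -
  have W: "tapply Gf (dp (Suc N) x) = 0"
  proof -
    have "tapply Gf (dp (Suc N) x) = tapply Gf []"
      by (rule mlin_teq[OF mlin_Gf[of "Suc (Suc N)"]]) (use N dp_len in \<open>auto simp del: dpow.simps\<close>)
    then show ?thesis by simp
  qed
  have R: "tapply Rf (dp k x) = tapply (\<lambda>l. rcomb mult (map E l)) (dp k x)" for k
  proof (rule tapply_cong)
    fix l assume "l \<in> set (dp k x)"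
    then have "\<forall>z\<in>set l. eps z = 0" using dp_h[OF x] by blast
    then have "map (\<lambda>z. E (pr z)) l = map E l" by (intro map_cong) (simp_all add: pr_id)
    then show "Rf l = rcomb mult (map E l)" unfolding Rf_def by (simp only:)
  qed
  have "x = (\<Sum>k<Suc N. tapply Rf (dp k x))"
    using telescope[OF x, of "Suc N"] W by simp
  also have "\<dots> = tapply Rf (dp 0 x) + (\<Sum>k<N. tapply Rf (dp (Suc k) x))"
    by (rule sum.lessThan_Suc_shift)
  also have "tapply Rf (dp 0 x) = E x" by (simp add: Rf_def pr_id[OF x])
  also have "(\<Sum>k<N. tapply Rf (dp (Suc k) x)) = (\<Sum>n\<in>{1..N}. tapply (\<lambda>l. rcomb mult (map E l)) (dp n x))"
    unfolding R One_nat_def sum.atLeast1_atMost_eq ..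
  finally show ?thesis .
qed

end

theorem lemma4p3:
  fixes scale :: "'k::field \<Rightarrow> 'a::ab_group_add \<Rightarrow> 'a"
    and mult :: "'a \<Rightarrow> 'a \<Rightarrow> 'a" and u :: 'a
    and Delta :: "'a \<Rightarrow> 'a list list" and eps :: "'a \<Rightarrow> 'k"
    and x :: 'a and N :: nat
  assumes "AsMag_bialgebra scale mult u Delta eps"
    and "connected_bialg scale u Delta eps"
    and "eps x = 0"
    and "\<forall>n\<ge>N. teq scale (dpow scale eps u Delta n x) []"
  shows "x = eproj scale mult eps u Delta x
           + (\<Sum>n\<in>{1..N}. tapply (\<lambda>l. rcomb mult (map (eproj scale mult eps u Delta) l))
                                  (dpow scale eps u Delta n x))"
proof -
  interpret A0: asmag0 scale mult u Delta eps by unfold_locales (rule assms(1))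
  show ?thesis
  proof (cases "u = 0")
    case True
    have "z = 0" for z :: 'a
    proof -
      have "mult 0 z = mult 0 z + mult 0 z" using A0.mult_l(1)[of 0 0 z] by simp
      then have "mult 0 z = 0" by simp
      then show "z = 0" using A0.unit_l[of z] True by simp
    qed
    then show ?thesis by metis
  next
    case False
    then have "eps u = 1" using A0.eps_u by blast
    then interpret A: asmag scale mult u Delta eps by unfold_locales (use assms(2) in auto)
    show ?thesis by (rule A.main_loc[OF assms(3,4)])
  qed
qed


end
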